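(* Let $\mathcal{D}$ be a collection of random variables on $\Omega$ containing all constants, with coherent$_1$ marginal previsions $P(\cdot)$. Let $\mathcal{L}$ be the linear span of all functions of the form $XB$ with $X\in\mathcal{D}$ and $B$ a nonempty event. Then there exists a coherent$_1$ conditional prevision $P(\cdot\mid\cdot)$ on the set $\{(X,B):X\in\mathcal{L},\ B\ne\emptyset\}$, with $P(X\mid\Omega)=P(X)$ for $X\in\mathcal{D}$, such that for each nonempty event $B$, $P(\cdot\mid B)$ is a finitely additive expectation on $\mathcal{L}$ with $P(XB\mid B)=P(X\mid B)$ for all $X\in\mathcal{L}$; that is, $P(\cdot\mid\cdot)$ is a finitely additive conditional expectation.
   Context: Random variables are real-valued functions on a nonempty set $\Omega$; events are subsets, identified with indicator functions; $XB$ is the pointwise product. Previsions are extended real numbers; $P(X)=P(X\mid\Omega)$. Coherence$_1$: a collection $\{P(X_i\mid B_i):i\in I\}$ (with nonempty $B_i$) is coherent$_1$ if for every finite $\{i_1,\dots,i_n\}\subseteq I$, all real $\alpha_1,\dots,\alpha_n$ with $\alpha_j\ge 0$ whenever $P(X_{i_j}\mid B_{i_j})=+\infty$ and $\alpha_j\le 0$ whenever $P(X_{i_j}\mid B_{i_j})=-\infty$, and all real $c_j$ with $c_j=P(X_{i_j}\mid B_{i_j})$ whenever finite, $\sup_\omega \sum_{j=1}^n \alpha_j B_{i_j}(\omega)[X_{i_j}(\omega)-c_j]\ge 0$. A finitely additive expectation on a linear space $\mathcal{L}$ containing constants is a map $L:\mathcal{L}\to\mathbb{R}\cup\{\pm\infty\}$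 that is nonnegative ($X\le Y$ implies $L(X)\le L(Y)$), extended-linear ($L(\alpha X+\beta Y)=\alpha L(X)+\beta L(Y)$ for real $\alpha,\beta$ whenever the right side is not $\infty-\infty$, with $0\times(\pm\infty)=0$), and has $L(1)=1$. Finitely additive conditional expectation: given a linear space $\mathcal{L}$, a collection $\mathcal{B}$ of nonempty events including $\Omega$ with $XB\in\mathcal{L}$ for $X\in\mathcal{L}$, $B\in\mathcal{B}$, a map $L(\cdot\mid\cdot):\mathcal{L}\times\mathcal{B}\to\mathbb{R}\cup\{\pm\infty\}$ is a finitely additive conditional expectation if for each $B\in\mathcal{B}$, $L(\cdot\mid B)$ is a finitely additive expectation on $\mathcal{L}$ with $L(XB\mid B)=L(X\mid B)$, and $\{L(X\mid B)\}$ is a coherent$_1$ conditional prevision. *)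

theory Defs
  imports "HOL-Analysis.Analysis"
begin

text \<open>Sample space: the (nonempty) universe of type 'w.
  Events: 'w set, identified with their real indicator functions.\<close>

definition coherent1 :: "(('w \<Rightarrow> real) \<times> 'w set) set \<Rightarrow> (('w \<Rightarrow> real) \<Rightarrow> 'w set \<Rightarrow> ereal) \<Rightarrow> bool" where
  "coherent1 S P \<longleftrightarrow>
     (\<forall>F \<alpha> c. finite F \<and> F \<subseteq> S
        \<and> (\<forall>p\<in>F. P (fst p) (snd p) = \<infinity> \<longrightarrow> \<alpha> p \<ge> 0)
        \<and> (\<forall>p\<in>F. P (fst p) (snd p) = -\<infinity> \<longrightarrow> \<alpha> p \<le> 0)
        \<and> (\<forall>p\<in>F. \<bar>P (fst p) (snd p)\<bar> \<noteq> \<infinity> \<longrightarrow> ereal (c p) = P (fst p) (snd p))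
      \<longrightarrow> (SUP \<omega>. ereal (\<Sum>p\<in>F. \<alpha> p * indicator (snd p) \<omega> * (fst p \<omega> - c p))) \<ge> 0)"

definition lin_span :: "('w \<Rightarrow> real) set \<Rightarrow> ('w \<Rightarrow> real) set" where
  "lin_span S = {(\<lambda>\<omega>. \<Sum>i<(n::nat). a i * f i \<omega>) | n a f. \<forall>i<n. f i \<in> S}"

definition fa_expectation :: "('w \<Rightarrow> real) set \<Rightarrow> (('w \<Rightarrow> real) \<Rightarrow> ereal) \<Rightarrow> bool" where
  "fa_expectation L E \<longleftrightarrow>
     (\<forall>X\<in>L. \<forall>Y\<in>L. (\<forall>\<omega>. X \<omega> \<le> Y \<omega>) \<longrightarrow> E X \<le> E Y)
   \<and> (\<forall>X\<in>L. \<forall>Y\<in>L. \<forall>a b::real.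
        \<not> (ereal a * E X = \<infinity> \<and> ereal b * E Y = -\<infinity>)
      \<and> \<not> (ereal a * E X = -\<infinity> \<and> ereal b * E Y = \<infinity>)
      \<longrightarrow> E (\<lambda>\<omega>. a * X \<omega> + b * Y \<omega>) = ereal a * E X + ereal b * E Y)
   \<and> E (\<lambda>_. 1) = 1"

definition fa_cond_expectation ::
  "('w \<Rightarrow> real) set \<Rightarrow> 'w set set \<Rightarrow> (('w \<Rightarrow> real) \<Rightarrow> 'w set \<Rightarrow> ereal) \<Rightarrow> bool" where
  "fa_cond_expectation L \<B> P \<longleftrightarrow>
     (\<forall>B\<in>\<B>. fa_expectation L (\<lambda>X. P X B)
         \<and> (\<forall>X\<in>L. P (\<lambda>\<omega>. X \<omega> * indicator B \<omega>) B = P X B))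
   \<and> coherent1 (L \<times> \<B>) P"

end

theory Submission
  imports Defs
begin


definition okt :: "(('w \<Rightarrow> real) \<Rightarrow> ereal) \<Rightarrow> ('w \<Rightarrow> real) set \<Rightarrow> ('w \<Rightarrow> real) \<times> real \<times> real \<Rightarrow> bool" where
  "okt E M t \<longleftrightarrow> (case t of (Y,a,c) \<Rightarrow> Y \<in> M \<and> (E Y = \<infinity> \<longrightarrow> 0 \<le> a) \<and> (E Y = -\<infinity> \<longrightarrow> a \<le> 0)
      \<and> (\<bar>E Y\<bar> \<noteq> \<infinity> \<longrightarrow> ereal c = E Y))"

definition gam :: "(('w \<Rightarrow> real) \<times> real \<times> real) list \<Rightarrow> 'w \<Rightarrow> real" where
  "gam xs \<omega> = sum_list (map (\<lambda>(Y,a,c). a * (Y \<omega> - c)) xs)"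

definition cohL :: "(('w \<Rightarrow> real) \<Rightarrow> ereal) \<Rightarrow> ('w \<Rightarrow> real) set \<Rightarrow> bool" where
  "cohL E M \<longleftrightarrow> (\<forall>xs e. (\<forall>t\<in>set xs. okt E M t) \<longrightarrow> 0 < e \<longrightarrow> (\<exists>\<omega>. -e < gam xs \<omega>))"

lemma gam_Nil[simp]: "gam [] \<omega> = 0" by (simp add: gam_def)
lemma gam_Cons[simp]: "gam ((Y,a,c)#xs) \<omega> = a * (Y \<omega> - c) + gam xs \<omega>" by (simp add: gam_def)
lemma gam_append: "gam (xs@ys) \<omega> = gam xs \<omega> + gam ys \<omega>" by (simp add: gam_def)

definition scl :: "real \<Rightarrow> (('w \<Rightarrow> real) \<times> real \<times> real) list \<Rightarrow> (('w \<Rightarrow> real) \<times> real \<times> real) list" where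
  "scl r xs = map (\<lambda>(Y,a,c). (Y, r*a, c)) xs"

lemma gam_scl: "gam (scl r xs) \<omega> = r * gam xs \<omega>"
  by (induction xs) (auto simp: scl_def algebra_simps)

lemma okt_scl: "r \<ge> 0 \<Longrightarrow> \<forall>t\<in>set xs. okt E M t \<Longrightarrow> \<forall>t\<in>set (scl r xs). okt E M t"
  by (auto simp: scl_def okt_def mult_nonneg_nonpos split: prod.splits)

lemma gam_filter: "gam xs \<omega> = gam (filter P xs) \<omega> + gam (filter (\<lambda>t. \<not> P t) xs) \<omega>"
  by (induction xs) auto

lemma okt_cong: "(\<And>Y. Y \<in> M \<Longrightarrow> E Y = E' Y) \<Longrightarrow> okt E M t = okt E' M t"
  by (auto simp: okt_def split: prod.splits)

lemma cohL_cong: "(\<And>Y. Y \<in> M \<Longrightarrow> E Y = E' Y) \<Longrightarrow> cohL E M = cohL E' M"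
  unfolding cohL_def using okt_cong[of M E E'] by metis

lemma okt_mono: "okt E M' t \<Longrightarrow> M' \<subseteq> M \<Longrightarrow> okt E M t"
  by (auto simp: okt_def split: prod.splits)

lemma cohL_mono: "cohL E M \<Longrightarrow> M' \<subseteq> M \<Longrightarrow> cohL E M'"
  unfolding cohL_def using okt_mono by metis


lemma gam_split: "gam xs \<omega> = sum_list (map (\<lambda>(Y,a,c). a * Y \<omega>) xs) - sum_list (map (\<lambda>(Y,a,c). a*c) xs)"
  by (induction xs) (auto simp: algebra_simps)

lemma sum_ereal_not_minf:
  "\<forall>x\<in>set xs. (x::ereal) \<noteq> -\<infinity> \<Longrightarrow> sum_list xs \<noteq> -\<infinity>"
  by (induction xs) auto

lemma choose_cs:
  assumes "\<forall>(Y,a)\<in>set ts. ereal a * E Y \<noteq> -\<infinity>"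
    and "ereal K < sum_list (map (\<lambda>(Y,a). ereal a * E Y) ts)"
  shows "\<exists>xs. map (\<lambda>(Y,a,c). (Y,a)) xs = ts \<and> (\<forall>t\<in>set xs. okt E UNIV t)
            \<and> K < sum_list (map (\<lambda>(Y,a,c). a*c) xs)"
  using assms
proof (induction ts arbitrary: K)
  case Nil
  then show ?case by (intro exI[of _ "[]"]) (auto simp: zero_ereal_def)
next
  case (Cons p ts)
  obtain Y a where p: "p = (Y,a)" by (cases p)
  define t where "t = ereal a * E Y"
  define S where "S = sum_list (map (\<lambda>(Y,a). ereal a * E Y) ts)"
  have tn: "t \<noteq> -\<infinity>" using Cons.prems(1) p t_def by auto
  have Sn: "S \<noteq> -\<infinity>" unfolding S_def
    apply (rule sum_ereal_not_minf) using Cons.prems(1) by auto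
  have sum: "ereal K < t + S" using Cons.prems(2) p t_def S_def by simp
  show ?case
  proof (cases "t = \<infinity>")
    case False
    then obtain tr where tr: "t = ereal tr" using tn by (cases t) auto
    define c where "c = (if \<bar>E Y\<bar> \<noteq> \<infinity> then real_of_ereal (E Y) else 0)"
    have ac: "a * c = tr"
    proof (cases "\<bar>E Y\<bar> = \<infinity>")
      case True
      then have "a = 0" using tr unfolding t_def by (cases "E Y") (auto split: if_splits)
      then show ?thesis using tr t_def by (simp add: c_def zero_ereal_def[symmetric])
    next
      case False
      then show ?thesis using tr t_def c_def by (cases "E Y") auto
    qed
    have okh: "okt E UNIV (Y,a,c)"
    proof -
      have "E Y = \<infinity> \<Longrightarrow> a = 0" using tr t_def by (auto split: if_splits)
      moreover have "E Y = -\<infinity> \<Longrightarrow> a = 0" using tr t_def by (auto split: if_splits)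
      ultimately show ?thesis unfolding okt_def c_def by (cases "E Y") auto
    qed
    have "ereal (K - tr) < S" using sum tr Sn by (cases S) auto
    then obtain xs where xs: "map (\<lambda>(Y,a,c). (Y,a)) xs = ts" "\<forall>t\<in>set xs. okt E UNIV t"
      "K - tr < sum_list (map (\<lambda>(Y,a,c). a*c) xs)"
      using Cons.IH[of "K - tr"] Cons.prems(1) S_def by auto
    show ?thesis
      by (intro exI[of _ "(Y,a,c)#xs"]) (use xs okh ac p in auto)
  next
    case True
    obtain R where R: "ereal R < S" using Sn
    proof (cases S)
      case (real r) then show ?thesis using that[of "r - 1"] by simp
    next
      case PInf then show ?thesis using that[of 0] by simp
    qed (use Sn in auto)
    then obtain xs where xs: "map (\<lambda>(Y,a,c). (Y,a)) xs = ts" "\<forall>t\<in>set xs. okt E UNIV t"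
      "R < sum_list (map (\<lambda>(Y,a,c). a*c) xs)"
      using Cons.IH[of R] Cons.prems(1) S_def by auto
    have sg: "(0 < a \<and> E Y = \<infinity>) \<or> (a < 0 \<and> E Y = -\<infinity>)"
      using True t_def by (auto simp: ereal_mult_eq_PInfty)
    define c where "c = (K - R + 1) / a"
    have ac: "a * c = K - R + 1" using sg c_def by auto
    have okh: "okt E UNIV (Y,a,c)" using sg unfolding okt_def by auto
    show ?thesis
      by (intro exI[of _ "(Y,a,c)#xs"]) (use xs okh ac p in auto)
  qed
qed

lemma map_pair_sum: "sum_list (map (\<lambda>(Y,a,c). a * Y \<omega>) xs) = sum_list (map (\<lambda>(Y,a). a * Y \<omega>) (map (\<lambda>(Y,a,c). (Y,a)) xs))"
  proof (induction xs)
  case (Cons t xs) then show ?case by (cases t) simp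
qed simp

lemma gen:
  assumes coh: "cohL E UNIV"
    and nm: "\<forall>(Y,a)\<in>set ts. ereal a * E Y \<noteq> -\<infinity>"
    and bd: "\<And>\<omega>. sum_list (map (\<lambda>(Y,a). a * Y \<omega>) ts) \<le> K"
  shows "sum_list (map (\<lambda>(Y,a). ereal a * E Y) ts) \<le> ereal K"
proof (rule ccontr)
  assume "\<not> ?thesis"
  then have "ereal K < sum_list (map (\<lambda>(Y,a). ereal a * E Y) ts)" by simp
  then obtain xs where xs: "map (\<lambda>(Y,a,c). (Y,a)) xs = ts" "\<forall>t\<in>set xs. okt E UNIV t"
      "K < sum_list (map (\<lambda>(Y,a,c). a*c) xs)"
    using choose_cs[OF nm] by blast
  define s where "s = sum_list (map (\<lambda>(Y,a,c). a*c) xs)"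
  have eq: "\<And>\<omega>. sum_list (map (\<lambda>(Y,a,c). a * Y \<omega>) xs) = sum_list (map (\<lambda>(Y,a). a * Y \<omega>) ts)"
    using map_pair_sum[of _ xs] unfolding xs(1) by metis
  have "0 < s - K" using xs(3) s_def by simp
  then obtain \<omega> where "-(s - K) < gam xs \<omega>"
    using coh xs(2) unfolding cohL_def by blast
  then show False using bd[of \<omega>] eq[of \<omega>] gam_split[of xs \<omega>] s_def by linarith
qed


lemma E_one: assumes coh: "cohL E UNIV" shows "E (\<lambda>_. 1) = 1"
proof -
  have le: "E (\<lambda>_. 1) \<le> 1" if "E (\<lambda>_. 1) \<noteq> -\<infinity>"
    using gen[OF coh, of "[(\<lambda>_. 1, 1)]" 1] that by (simp add: one_ereal_def)
  have ge: "E (\<lambda>_. 1) \<ge> 1" if "E (\<lambda>_. 1) \<noteq> \<infinity>"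
  proof -
    have "ereal (-1) * E (\<lambda>_. 1) \<le> ereal (-1)"
      using gen[OF coh, of "[(\<lambda>_. 1, -1)]" "-1"] that by (cases "E (\<lambda>_. 1)") auto
    then show ?thesis by (cases "E (\<lambda>_. 1)") auto
  qed
  show ?thesis using le ge by (cases "E (\<lambda>_. 1)") auto
qed

lemma E_mono: assumes coh: "cohL E UNIV" and le: "\<And>\<omega>. X \<omega> \<le> Y \<omega>" shows "E X \<le> E Y"
proof (cases "E X = -\<infinity> \<or> E Y = \<infinity>")
  case True then show ?thesis by auto
next
  case False
  have "ereal 1 * E X + (ereal (-1) * E Y + 0) \<le> ereal 0"
    using gen[OF coh, of "[(X,1),(Y,-1)]" 0] False le by (cases "E Y") auto
  then show ?thesis using False by (cases "E X"; cases "E Y") auto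
qed

lemma E_hom: assumes coh: "cohL E UNIV" shows "E (\<lambda>\<omega>. a * X \<omega>) = ereal a * E X"
proof -
  define p where "p = E (\<lambda>\<omega>. a * X \<omega>)"
  define q where "q = ereal a * E X"
  have mq: "ereal (-a) * E X = - q" unfolding q_def by (cases "E X") auto
  have 1: "p = -\<infinity> \<or> q = \<infinity> \<or> p \<le> q"
  proof (cases "p = -\<infinity> \<or> q = \<infinity>")
    case False
    have "(0 < a \<longrightarrow> E X \<noteq> \<infinity>) \<and> (a < 0 \<longrightarrow> E X \<noteq> - \<infinity>)" using False q_def by auto
    have "ereal 1 * p + (ereal (-a) * E X + 0) \<le> ereal 0"
      using gen[OF coh, of "[(\<lambda>\<omega>. a * X \<omega>,1),(X,-a)]" 0] False mq \<open>(0 < a \<longrightarrow> E X \<noteq> \<infinity>) \<and> _\<close> unfolding p_def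
      by (auto simp: one_ereal_def[symmetric])
    then have "p + - q \<le> 0" using mq by (simp add: zero_ereal_def[symmetric])
    then show ?thesis using False by (cases p; cases q) auto
  qed auto
  have 2: "p = \<infinity> \<or> q = -\<infinity> \<or> q \<le> p"
  proof (cases "p = \<infinity> \<or> q = -\<infinity>")
    case False
    have mp: "ereal (-1) * p = -p" by (cases p) auto
    have "ereal (-1) * p + (q + 0) \<le> ereal 0"
      using gen[OF coh, of "[(\<lambda>\<omega>. a * X \<omega>,-1),(X,a)]" 0] False mp unfolding p_def q_def
      by auto
    then have "-p + q \<le> 0" using mp by (simp add: zero_ereal_def[symmetric])
    then show ?thesis using False by (cases p; cases q) auto
  qed auto
  show ?thesis using 1 2 unfolding p_def[symmetric] q_def[symmetric] by (cases p; cases q) auto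
qed

lemma E_add: assumes coh: "cohL E UNIV"
  and nopp: "\<not> (E X = \<infinity> \<and> E Y = -\<infinity>)" "\<not> (E X = -\<infinity> \<and> E Y = \<infinity>)"
  shows "E (\<lambda>\<omega>. X \<omega> + Y \<omega>) = E X + E Y"
proof -
  define p where "p = E (\<lambda>\<omega>. X \<omega> + Y \<omega>)"
  define x where "x = E X"
  define y where "y = E Y"
  have mx: "ereal (-1) * z = -z" for z by (cases z) auto
  have 1: "p = -\<infinity> \<or> x = \<infinity> \<or> y = \<infinity> \<or> p + - x + - y \<le> 0"
  proof (cases "p = -\<infinity> \<or> x = \<infinity> \<or> y = \<infinity>")
    case False
    have "ereal 1 * p + (ereal (-1) * x + (ereal (-1) * y + 0)) \<le> ereal 0"
      using gen[OF coh, of "[(\<lambda>\<omega>. X \<omega> + Y \<omega>,1),(X,-1),(Y,-1)]" 0] False mx unfolding p_def x_def y_def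
      by auto
    then show ?thesis using mx by (simp add: add.assoc zero_ereal_def[symmetric])
  qed auto
  have 2: "p = \<infinity> \<or> x = -\<infinity> \<or> y = -\<infinity> \<or> -p + x + y \<le> 0"
  proof (cases "p = \<infinity> \<or> x = -\<infinity> \<or> y = -\<infinity>")
    case False
    have "ereal (-1) * p + (ereal 1 * x + (ereal 1 * y + 0)) \<le> ereal 0"
      using gen[OF coh, of "[(\<lambda>\<omega>. X \<omega> + Y \<omega>,-1),(X,1),(Y,1)]" 0] False mx unfolding p_def x_def y_def
      by auto
    then show ?thesis using mx by (simp add: add.assoc zero_ereal_def[symmetric])
  qed auto
  have n1: "\<not> (x = \<infinity> \<and> y = -\<infinity>)" "\<not> (x = -\<infinity> \<and> y = \<infinity>)" using nopp x_def y_def by auto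
  show ?thesis using 1 2 n1 unfolding p_def[symmetric] x_def[symmetric] y_def[symmetric]
    by (cases p; cases x; cases y) auto
qed


lemma E_const: assumes coh: "cohL E UNIV" shows "E (\<lambda>_. r) = ereal r"
  using E_hom[OF coh, of r "\<lambda>_. 1"] E_one[OF coh] by simp

lemma E_lin: assumes coh: "cohL E UNIV"
  and nopp: "\<not> (ereal a * E X = \<infinity> \<and> ereal b * E Y = -\<infinity>)" "\<not> (ereal a * E X = -\<infinity> \<and> ereal b * E Y = \<infinity>)"
  shows "E (\<lambda>\<omega>. a * X \<omega> + b * Y \<omega>) = ereal a * E X + ereal b * E Y"
  using E_add[OF coh, of "\<lambda>\<omega>. a * X \<omega>" "\<lambda>\<omega>. b * Y \<omega>"] E_hom[OF coh] nopp by simp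

lemma fa_E: assumes coh: "cohL E UNIV" shows "fa_expectation L E"
  unfolding fa_expectation_def using E_mono[OF coh] E_lin[OF coh] E_one[OF coh] by blast

lemma E_sum: assumes coh: "cohL E UNIV" and fin: "finite F" and nn: "\<forall>p\<in>F. E (h p) \<ge> 0"
  shows "E (\<lambda>\<omega>. \<Sum>p\<in>F. h p \<omega>) \<ge> 0"
  using fin nn
proof (induction F rule: finite_induct)
  case empty
  then show ?case using E_const[OF coh, of 0] by simp
next
  case (insert x F)
  have a: "E (h x) \<ge> 0" using insert by auto
  have b: "E (\<lambda>\<omega>. \<Sum>p\<in>F. h p \<omega>) \<ge> 0" using insert by auto
  have "E (\<lambda>\<omega>. h x \<omega> + (\<Sum>p\<in>F. h p \<omega>)) = E (h x) + E (\<lambda>\<omega>. \<Sum>p\<in>F. h p \<omega>)"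
    using E_add[OF coh, of "h x" "\<lambda>\<omega>. \<Sum>p\<in>F. h p \<omega>"] a b by auto
  then show ?case using insert a b by simp
qed

lemma E_sup: assumes coh: "cohL E UNIV" and nn: "E Z \<ge> 0"
  shows "(SUP \<omega>. ereal (Z \<omega>)) \<ge> 0"
proof (rule ccontr)
  assume "\<not> ?thesis"
  then have lt: "(SUP \<omega>. ereal (Z \<omega>)) < 0" by simp
  then obtain r :: ereal where r: "(SUP \<omega>. ereal (Z \<omega>)) < r" "r < 0" using dense by blast
  obtain rr where rr: "r = ereal rr" using r by (cases r) auto
  have "\<And>\<omega>. Z \<omega> \<le> rr"
  proof -
    fix \<omega>
    have "ereal (Z \<omega>) \<le> (SUP \<omega>. ereal (Z \<omega>))" by (rule SUP_upper) auto
    then have "ereal (Z \<omega>) < ereal rr" using r rr by (meson order.strict_trans1)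
    then show "Z \<omega> \<le> rr" by simp
  qed
  then have "E Z \<le> E (\<lambda>_. rr)" by (rule E_mono[OF coh])
  then have "0 \<le> ereal rr" using E_const[OF coh, of rr] nn by (metis order.trans)
  then show False using rr r by simp
qed

definition fsg :: "ereal \<Rightarrow> real \<Rightarrow> ereal" where
  "fsg u v = (if 0 < u then \<infinity> else if u < 0 then -\<infinity> else ereal v)"

definition Pc :: "(('w \<Rightarrow> real) \<Rightarrow> ereal) \<Rightarrow> ('w \<Rightarrow> real) \<Rightarrow> 'w set \<Rightarrow> ereal" where
  "Pc E X B = (if 0 < E (\<lambda>\<omega>. indicator B \<omega>)
      then E (\<lambda>\<omega>. (1 / real_of_ereal (E (\<lambda>\<omega>. indicator B \<omega>))) * (X \<omega> * indicator B \<omega>))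
      else fsg (E (\<lambda>\<omega>. X \<omega> * indicator B \<omega>)) (X (SOME b. b \<in> B)))"

lemma eb_bounds: assumes coh: "cohL E UNIV"
  shows "0 \<le> E (\<lambda>\<omega>. indicator B \<omega>)" "E (\<lambda>\<omega>. indicator B \<omega>) \<le> 1"
proof -
  show "0 \<le> E (\<lambda>\<omega>. indicator B \<omega>)"
    using E_mono[OF coh, of "\<lambda>_. 0" "\<lambda>\<omega>. indicator B \<omega>"] E_const[OF coh, of 0] by (auto simp: zero_ereal_def)
  show "E (\<lambda>\<omega>. indicator B \<omega>) \<le> 1"
    using E_mono[OF coh, of "\<lambda>\<omega>. indicator B \<omega>" "\<lambda>_. 1"] E_one[OF coh] by (auto simp: indicator_def)
qed

lemma Pc_UNIV: assumes coh: "cohL E UNIV" shows "Pc E X UNIV = E X"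
  using E_one[OF coh] by (simp add: Pc_def)


lemma fsg_mono: "u1 \<le> u2 \<Longrightarrow> v1 \<le> v2 \<Longrightarrow> fsg u1 v1 \<le> fsg u2 v2"
  by (auto simp: fsg_def)

lemma fsg_inf: "ereal a * u = \<infinity> \<Longrightarrow> ereal a * fsg u v = \<infinity>"
  "ereal a * u = -\<infinity> \<Longrightarrow> ereal a * fsg u v = -\<infinity>"
  by (auto simp: fsg_def ereal_mult_eq_PInfty ereal_mult_eq_MInfty)

lemma fsg_pos: "a \<noteq> 0 \<Longrightarrow> u \<noteq> 0 \<Longrightarrow> (ereal a * fsg u v = \<infinity>) = (0 < ereal a * u)"
  by (cases u) (auto simp: fsg_def zero_less_mult_iff ereal_mult_eq_PInfty)

lemma fsg_neg: "a \<noteq> 0 \<Longrightarrow> u \<noteq> 0 \<Longrightarrow> (ereal a * fsg u v = -\<infinity>) = (ereal a * u < 0)"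
  by (cases u) (auto simp: fsg_def mult_less_0_iff ereal_mult_eq_MInfty)

lemma fsg_nz: "a \<noteq> 0 \<Longrightarrow> (u::ereal) \<noteq> 0 \<Longrightarrow> ereal a * u \<noteq> 0"
  by (cases u) auto

lemma fsg_inf_cases: "a \<noteq> 0 \<Longrightarrow> u \<noteq> 0 \<Longrightarrow> ereal a * fsg u v = \<infinity> \<or> ereal a * fsg u v = -\<infinity>"
  using fsg_pos fsg_neg fsg_nz by (metis linorder_neqE)

lemma fsg_scale: assumes u: "u \<noteq> 0" and False: "b \<noteq> 0" shows "fsg (ereal b * u) w = ereal b * fsg u v"
proof -
  show ?thesis
  proof (cases "0 < ereal b * u")
    case True
    have "fsg (ereal b * u) w = \<infinity>" using True by (simp add: fsg_def)
    moreover have "ereal b * fsg u v = \<infinity>" using fsg_pos[OF False u, of v] True by simp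
    ultimately show ?thesis by metis
  next
    case c2: False
    then have n: "ereal b * u < 0" using fsg_nz[OF False u] by (metis linorder_neqE)
    have "fsg (ereal b * u) w = -\<infinity>" using n by (simp add: fsg_def)
    moreover have "ereal b * fsg u v = -\<infinity>" using fsg_neg[OF False u, of v] n by simp
    ultimately show ?thesis by metis
  qed
qed

lemma fsg_lin:
  assumes n1: "\<not> (ereal a * fsg u1 v1 = \<infinity> \<and> ereal b * fsg u2 v2 = -\<infinity>)"
    and n2: "\<not> (ereal a * fsg u1 v1 = -\<infinity> \<and> ereal b * fsg u2 v2 = \<infinity>)"
  shows "fsg (ereal a * u1 + ereal b * u2) (a * v1 + b * v2) = ereal a * fsg u1 v1 + ereal b * fsg u2 v2"
proof (cases "u1 = 0")
  case u1z: True
  then have l: "ereal a * u1 + ereal b * u2 = ereal b * u2" by simp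
  have r: "ereal a * fsg u1 v1 = ereal (a * v1)" using u1z by (simp add: fsg_def)
  show ?thesis
  proof (cases "u2 = 0")
    case u2: True then show ?thesis using u1z by (simp add: fsg_def)
  next
    case False
    show ?thesis
    proof (cases "b = 0")
      case True then show ?thesis using l r u1z by (simp add: fsg_def zero_ereal_def[symmetric])
    next
      case bn: False
      show ?thesis unfolding l r fsg_scale[OF False bn, of _ v2]
        using fsg_inf_cases[OF bn False, of v2] by auto
    qed
  qed
next
  case u1: False
  show ?thesis
  proof (cases "u2 = 0")
    case u2z: True
    then have l: "ereal a * u1 + ereal b * u2 = ereal a * u1" by simp
    have r: "ereal b * fsg u2 v2 = ereal (b * v2)" using u2z by (simp add: fsg_def)
    show ?thesis
    proof (cases "a = 0")
      case True then show ?thesis using l r u2z by (simp add: fsg_def zero_ereal_def[symmetric])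
    next
      case an: False
      show ?thesis unfolding l r fsg_scale[OF u1 an, of _ v1]
        using fsg_inf_cases[OF an u1, of v1] by auto
    qed
  next
    case u2: False
    show ?thesis
    proof (cases "a = 0")
      case an: True
      show ?thesis
      proof (cases "b = 0")
        case True then show ?thesis using an by (simp add: fsg_def zero_ereal_def[symmetric])
      next
        case False then show ?thesis using an fsg_scale[OF u2 False, of "a * v1 + b * v2" v2]
          by (simp add: zero_ereal_def[symmetric])
      qed
    next
      case an: False
      show ?thesis
      proof (cases "b = 0")
        case bn: True
        then show ?thesis using fsg_scale[OF u1 an, of "a * v1 + b * v2" v1]
          by (simp add: zero_ereal_def[symmetric])
      next
        case bn: False
        have c1: "ereal a * fsg u1 v1 = \<infinity> \<or> ereal a * fsg u1 v1 = -\<infinity>" using fsg_inf_cases[OF an u1] .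
        have c2: "ereal b * fsg u2 v2 = \<infinity> \<or> ereal b * fsg u2 v2 = -\<infinity>" using fsg_inf_cases[OF bn u2] .
        show ?thesis
        proof (cases "ereal a * fsg u1 v1 = \<infinity>")
          case True
          then have "ereal b * fsg u2 v2 = \<infinity>" using c2 n1 by auto
          then have "0 < ereal a * u1" "0 < ereal b * u2"
            using True fsg_pos[OF an u1] fsg_pos[OF bn u2] by auto
          then have "0 < ereal a * u1 + ereal b * u2" by (simp add: add_pos_pos)
          then have "fsg (ereal a * u1 + ereal b * u2) (a * v1 + b * v2) = \<infinity>" by (simp add: fsg_def)
          then show ?thesis using True \<open>ereal b * fsg u2 v2 = \<infinity>\<close> by simp
        next
          case False
          then have f1: "ereal a * fsg u1 v1 = -\<infinity>" using c1 by auto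
          then have "ereal b * fsg u2 v2 = -\<infinity>" using c2 n2 by auto
          then have "ereal a * u1 < 0" "ereal b * u2 < 0"
            using f1 fsg_neg[OF an u1] fsg_neg[OF bn u2] by auto
          then have "ereal a * u1 + ereal b * u2 < 0" by (simp add: add_neg_neg)
          then have "fsg (ereal a * u1 + ereal b * u2) (a * v1 + b * v2) = -\<infinity>" by (simp add: fsg_def)
          moreover have "ereal a * fsg u1 v1 + ereal b * fsg u2 v2 = -\<infinity>"
            unfolding f1 \<open>ereal b * fsg u2 v2 = -\<infinity>\<close> by simp
          ultimately show ?thesis by metis
        qed
      qed
    qed
  qed
qed


lemma ind_sq: "(indicator B \<omega> :: real) * indicator B \<omega> = indicator B \<omega>"
  by (simp add: indicator_def)

lemma Pc_fa:
  assumes coh: "cohL E UNIV" and ne: "B \<noteq> {}"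
  shows "fa_expectation L (\<lambda>X. Pc E X B) \<and> (\<forall>X. Pc E (\<lambda>\<omega>. X \<omega> * indicator B \<omega>) B = Pc E X B)"
proof (cases "0 < E (\<lambda>\<omega>. indicator B \<omega>)")
  case True
  obtain r where r: "E (\<lambda>\<omega>. indicator B \<omega>) = ereal r" "0 < r"
    using True eb_bounds(2)[OF coh, of B] by (cases "E (\<lambda>\<omega>. indicator B \<omega>)") auto
  define k where "k = 1 / r"
  have k: "0 < k" "k * r = 1" using r by (auto simp: k_def)
  have P: "Pc E X B = E (\<lambda>\<omega>. k * (X \<omega> * indicator B \<omega>))" for X
    using True r by (simp add: Pc_def k_def)
  have mono: "Pc E X B \<le> Pc E Y B" if "\<forall>\<omega>. X \<omega> \<le> Y \<omega>" for X Y
    unfolding P using that k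
    by (intro E_mono[OF coh]) (simp add: mult_left_mono mult_right_mono)
  have lin: "Pc E (\<lambda>\<omega>. a * X \<omega> + b * Y \<omega>) B = ereal a * Pc E X B + ereal b * Pc E Y B"
    if "\<not> (ereal a * Pc E X B = \<infinity> \<and> ereal b * Pc E Y B = -\<infinity>)"
       "\<not> (ereal a * Pc E X B = -\<infinity> \<and> ereal b * Pc E Y B = \<infinity>)" for a b X Y
  proof -
    have "(\<lambda>\<omega>. k * ((a * X \<omega> + b * Y \<omega>) * indicator B \<omega>))
      = (\<lambda>\<omega>. a * (k * (X \<omega> * indicator B \<omega>)) + b * (k * (Y \<omega> * indicator B \<omega>)))"
      by (auto simp: algebra_simps)
    then show ?thesis unfolding P
      using E_lin[OF coh, of a "\<lambda>\<omega>. k * (X \<omega> * indicator B \<omega>)" b "\<lambda>\<omega>. k * (Y \<omega> * indicator B \<omega>)"] that[unfolded P]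
      by simp
  qed
  have one: "Pc E (\<lambda>_. 1) B = 1"
    unfolding P using E_hom[OF coh, of k "\<lambda>\<omega>. indicator B \<omega>"] r k by simp
  have cond: "Pc E (\<lambda>\<omega>. X \<omega> * indicator B \<omega>) B = Pc E X B" for X
    unfolding P by (simp add: mult.assoc ind_sq)
  show ?thesis unfolding fa_expectation_def using mono lin one cond by blast
next
  case False
  then have eb0: "E (\<lambda>\<omega>. indicator B \<omega>) = 0" using eb_bounds(1)[OF coh, of B] by auto
  define b0 where "b0 = (SOME b. b \<in> B)"
  have b0: "b0 \<in> B" using ne unfolding b0_def by (auto intro: someI)
  define u where "u X = E (\<lambda>\<omega>. X \<omega> * indicator B \<omega>)" for X
  have P: "Pc E X B = fsg (u X) (X b0)" for X
    using False by (simp add: Pc_def u_def b0_def)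
  have mono: "Pc E X B \<le> Pc E Y B" if "\<forall>\<omega>. X \<omega> \<le> Y \<omega>" for X Y
    unfolding P using that
    by (intro fsg_mono) (auto simp: u_def intro!: E_mono[OF coh] mult_right_mono)
  have lin: "Pc E (\<lambda>\<omega>. a * X \<omega> + b * Y \<omega>) B = ereal a * Pc E X B + ereal b * Pc E Y B"
    if n: "\<not> (ereal a * Pc E X B = \<infinity> \<and> ereal b * Pc E Y B = -\<infinity>)"
       "\<not> (ereal a * Pc E X B = -\<infinity> \<and> ereal b * Pc E Y B = \<infinity>)" for a b X Y
  proof -
    have "(\<lambda>\<omega>. (a * X \<omega> + b * Y \<omega>) * indicator B \<omega>)
      = (\<lambda>\<omega>. a * (X \<omega> * indicator B \<omega>) + b * (Y \<omega> * indicator B \<omega>))"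
      by (auto simp: algebra_simps)
    moreover have "\<not> (ereal a * u X = \<infinity> \<and> ereal b * u Y = -\<infinity>)"
       "\<not> (ereal a * u X = -\<infinity> \<and> ereal b * u Y = \<infinity>)"
      using n[unfolded P] fsg_inf[of a "u X" "X b0"] fsg_inf[of b "u Y" "Y b0"] by blast+
    ultimately have "u (\<lambda>\<omega>. a * X \<omega> + b * Y \<omega>) = ereal a * u X + ereal b * u Y"
      unfolding u_def
      using E_lin[OF coh, of a "\<lambda>\<omega>. X \<omega> * indicator B \<omega>" b "\<lambda>\<omega>. Y \<omega> * indicator B \<omega>"] by simp
    then show ?thesis unfolding P using fsg_lin[OF n[unfolded P]] by simp
  qed
  have one: "Pc E (\<lambda>_. 1) B = 1"
    unfolding P u_def using eb0 by (simp add: fsg_def)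
  have cond: "Pc E (\<lambda>\<omega>. X \<omega> * indicator B \<omega>) B = Pc E X B" for X
    unfolding P u_def using b0 by (simp add: mult.assoc ind_sq)
  show ?thesis unfolding fa_expectation_def using mono lin one cond by blast
qed


lemma term_nonneg:
  assumes coh: "cohL E UNIV"
    and s1: "Pc E X B = \<infinity> \<longrightarrow> 0 \<le> \<alpha>" and s2: "Pc E X B = -\<infinity> \<longrightarrow> \<alpha> \<le> 0"
    and s3: "\<bar>Pc E X B\<bar> \<noteq> \<infinity> \<longrightarrow> ereal c = Pc E X B"
  shows "0 \<le> E (\<lambda>\<omega>. \<alpha> * indicator B \<omega> * (X \<omega> - c))"
proof -
  obtain r where r: "E (\<lambda>\<omega>. indicator B \<omega>) = ereal r" "0 \<le> r"
    using eb_bounds[OF coh, of B] by (cases "E (\<lambda>\<omega>. indicator B \<omega>)") auto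
  define uX where "uX = E (\<lambda>\<omega>. X \<omega> * indicator B \<omega>)"
  have feq: "(\<lambda>\<omega>. \<alpha> * indicator B \<omega> * (X \<omega> - c))
     = (\<lambda>\<omega>. \<alpha> * (X \<omega> * indicator B \<omega>) + (-(\<alpha>*c)) * indicator B \<omega>)"
    by (auto simp: algebra_simps)
  have Eh: "E (\<lambda>\<omega>. \<alpha> * indicator B \<omega> * (X \<omega> - c)) = ereal \<alpha> * uX + ereal (-(\<alpha>*c) * r)"
    unfolding feq uX_def
    using E_lin[OF coh, of \<alpha> "\<lambda>\<omega>. X \<omega> * indicator B \<omega>" "-(\<alpha>*c)" "\<lambda>\<omega>. indicator B \<omega>"] r
    by simp
  show ?thesis
  proof (cases "0 < r")
    case True
    define k where "k = 1 / r"
    have k: "0 < k" "k * r = 1" using True by (auto simp: k_def)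
    have P: "Pc E X B = ereal k * uX"
      using True r E_hom[OF coh, of k "\<lambda>\<omega>. X \<omega> * indicator B \<omega>"] by (simp add: Pc_def k_def uX_def)
    show ?thesis
    proof (cases uX)
      case (real ur)
      then have "c = k * ur" using s3 P by simp
      then have "\<alpha> * ur + (-(\<alpha>*c) * r) = 0" using k by (simp add: algebra_simps)
      then have "ereal \<alpha> * uX + ereal (-(\<alpha>*c) * r) = 0" using real by (simp only: times_ereal.simps plus_ereal.simps zero_ereal_def)
      then show ?thesis unfolding Eh by simp
    next
      case PInf
      then have "0 \<le> \<alpha>" using s1 P k by simp
      then show ?thesis unfolding Eh using PInf
        by (cases "\<alpha> = 0") (auto simp: zero_ereal_def)
    next
      case MInf
      then have "\<alpha> \<le> 0" using s2 P k by simp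
      then show ?thesis unfolding Eh using MInf
        by (cases "\<alpha> = 0") (auto simp: zero_ereal_def)
    qed
  next
    case False
    then have r0: "r = 0" using r by simp
    have P: "Pc E X B = fsg uX (X (SOME b. b \<in> B))"
      using r r0 by (simp add: Pc_def uX_def)
    have "0 \<le> ereal \<alpha> * uX"
    proof (cases "0 < uX")
      case True
      then have "0 \<le> \<alpha>" using s1 P by (simp add: fsg_def)
      then show ?thesis using True by simp
    next
      case c2: False
      show ?thesis
      proof (cases "uX < 0")
        case True
        then have "\<alpha> \<le> 0" using s2 P by (simp add: fsg_def)
        then show ?thesis using True by (cases uX; cases "\<alpha> = 0") (auto simp: mult_nonpos_nonpos)
      next
        case False
        then have "uX = 0" using c2 by auto
        then show ?thesis by simp
      qed
    qed
    then show ?thesis unfolding Eh using r0 by (simp add: zero_ereal_def)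
  qed
qed

lemma Pc_coherent: fixes E :: "('w \<Rightarrow> real) \<Rightarrow> ereal" assumes coh: "cohL E UNIV" shows "coherent1 S (Pc E)"
  unfolding coherent1_def
proof (intro allI impI)
  fix F :: "(('w \<Rightarrow> real) \<times> 'w set) set" and \<alpha> c :: "('w \<Rightarrow> real) \<times> 'w set \<Rightarrow> real"
  assume a: "finite F \<and> F \<subseteq> S \<and> (\<forall>p\<in>F. Pc E (fst p) (snd p) = \<infinity> \<longrightarrow> 0 \<le> \<alpha> p) \<and>
       (\<forall>p\<in>F. Pc E (fst p) (snd p) = - \<infinity> \<longrightarrow> \<alpha> p \<le> 0) \<and>
       (\<forall>p\<in>F. \<bar>Pc E (fst p) (snd p)\<bar> \<noteq> \<infinity> \<longrightarrow> ereal (c p) = Pc E (fst p) (snd p))"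
  have "0 \<le> E (\<lambda>\<omega>. \<Sum>p\<in>F. \<alpha> p * indicator (snd p) \<omega> * (fst p \<omega> - c p))"
    using a by (intro E_sum[OF coh]) (auto intro!: term_nonneg[OF coh])
  then show "0 \<le> (SUP \<omega>. ereal (\<Sum>p\<in>F. \<alpha> p * indicator (snd p) \<omega> * (fst p \<omega> - c p)))"
    by (rule E_sup[OF coh])
qed


lemma gam_X: "\<forall>t\<in>set ys. fst t = X \<Longrightarrow>
  gam ys \<omega> = sum_list (map (\<lambda>t. fst (snd t)) ys) * X \<omega> - sum_list (map (\<lambda>t. fst (snd t) * snd (snd t)) ys)"
proof (induction ys)
  case (Cons t ys) then show ?case by (cases t) (auto simp: algebra_simps)
qed simp

lemma sum_c_const: "\<forall>t\<in>set ys. snd (snd t) = u \<Longrightarrow>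
  sum_list (map (\<lambda>t. fst (snd t) * snd (snd t)) ys) = sum_list (map (\<lambda>t. fst (snd t)) ys) * (u::real)"
  by (induction ys) (auto simp: algebra_simps)

lemma sum_a_nonneg: "\<forall>t\<in>set ys. 0 \<le> fst (snd t) \<Longrightarrow> 0 \<le> sum_list (map (\<lambda>t. fst (snd t)) ys :: real list)"
  by (induction ys) auto

lemma sum_a_nonpos: "\<forall>t\<in>set ys. fst (snd t) \<le> 0 \<Longrightarrow> sum_list (map (\<lambda>t. fst (snd t)) ys :: real list) \<le> 0"
  by (induction ys) auto

lemma sum_ac_zero1: "\<forall>t\<in>set ys. 0 \<le> fst (snd t) \<Longrightarrow> sum_list (map (\<lambda>t. fst (snd t)) ys) = (0::real) \<Longrightarrow>
   sum_list (map (\<lambda>t. fst (snd t) * snd (snd t)) ys) = 0"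
proof (induction ys)
  case (Cons t ys)
  have "0 \<le> sum_list (map (\<lambda>t. fst (snd t)) ys)" using Cons.prems(1) by (intro sum_a_nonneg) auto
  then have "fst (snd t) = 0" "sum_list (map (\<lambda>t. fst (snd t)) ys) = 0" using Cons.prems by auto
  then show ?case using Cons by auto
qed simp

lemma sum_ac_zero2: "\<forall>t\<in>set ys. fst (snd t) \<le> 0 \<Longrightarrow> sum_list (map (\<lambda>t. fst (snd t)) ys) = (0::real) \<Longrightarrow>
   sum_list (map (\<lambda>t. fst (snd t) * snd (snd t)) ys) = 0"
proof (induction ys)
  case (Cons t ys)
  have "sum_list (map (\<lambda>t. fst (snd t)) ys) \<le> 0" using Cons.prems(1) by (intro sum_a_nonpos) auto
  then have "fst (snd t) = 0" "sum_list (map (\<lambda>t. fst (snd t)) ys) = 0" using Cons.prems by auto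
  then show ?case using Cons by auto
qed simp

lemma one_step:
  fixes E :: "('w \<Rightarrow> real) \<Rightarrow> ereal"
  assumes coh: "cohL E M" and X: "X \<notin> M"
  defines "U \<equiv> (INF xs\<in>{xs. \<forall>t\<in>set xs. okt E M t}. SUP \<omega>. ereal (gam xs \<omega> + X \<omega>))"
  shows "cohL (E(X := U)) (insert X M)"
  unfolding cohL_def
proof (intro allI impI)
  fix xs :: "(('w \<Rightarrow> real) \<times> real \<times> real) list" and e :: real
  assume ok: "\<forall>t\<in>set xs. okt (E(X := U)) (insert X M) t" and e: "0 < e"
  define xo where "xo = filter (\<lambda>t. fst t \<noteq> X) xs"
  define xx where "xx = filter (\<lambda>t. \<not> fst t \<noteq> X) xs"
  define A where "A = sum_list (map (\<lambda>t. fst (snd t)) xx)"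
  define C where "C = sum_list (map (\<lambda>t. fst (snd t) * snd (snd t)) xx)"
  have g: "gam xs \<omega> = gam xo \<omega> + (A * X \<omega> - C)" for \<omega>
    using gam_filter[of xs \<omega> "\<lambda>t. fst t \<noteq> X"] gam_X[of xx X \<omega>]
    unfolding xo_def xx_def A_def C_def by auto
  have okO: "\<forall>t\<in>set xo. okt E M t"
    using ok X unfolding xo_def by (auto simp: okt_def split: prod.splits)
  have okX: "\<forall>t\<in>set xx. (U = \<infinity> \<longrightarrow> 0 \<le> fst (snd t)) \<and> (U = -\<infinity> \<longrightarrow> fst (snd t) \<le> 0)
     \<and> (\<bar>U\<bar> \<noteq> \<infinity> \<longrightarrow> ereal (snd (snd t)) = U)"
    using ok unfolding xx_def by (auto simp: okt_def split: prod.splits)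
  have U_le: "U \<le> (SUP \<omega>. ereal (gam G \<omega> + X \<omega>))" if "\<forall>t\<in>set G. okt E M t" for G
    unfolding U_def by (rule INF_lower) (use that in auto)
  have Uinf: "U = \<infinity> \<Longrightarrow> 0 \<le> A" unfolding A_def using okX by (intro sum_a_nonneg) auto
  have Uminf: "U = -\<infinity> \<Longrightarrow> A \<le> 0" unfolding A_def using okX by (intro sum_a_nonpos) auto
  have Ufin: "U = ereal u \<Longrightarrow> C = A * u" for u
    unfolding A_def C_def using okX by (intro sum_c_const) auto
  show "\<exists>\<omega>. - e < gam xs \<omega>"
  proof (cases "0 < A")
    case Apos: True
    define G' where "G' = scl (1/A) xo"
    have okG: "\<forall>t\<in>set G'. okt E M t" unfolding G'_def using okO Apos by (intro okt_scl) auto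
    define K where "K = (C - e) / A"
    have "ereal K < U"
    proof (cases U)
      case (real u)
      then have "C = A * u" using Ufin by simp
      then have "K = u - e / A" using Apos by (simp add: K_def field_simps)
      then show ?thesis using real Apos e by simp
    qed (use Uminf Apos in auto)
    also have "\<dots> \<le> (SUP \<omega>. ereal (gam G' \<omega> + X \<omega>))" using U_le okG by blast
    finally obtain \<omega> where "ereal K < ereal (gam G' \<omega> + X \<omega>)" by (auto simp: less_SUP_iff)
    then have "K < (1/A) * gam xo \<omega> + X \<omega>" unfolding G'_def gam_scl by simp
    then have "A * K < gam xo \<omega> + A * X \<omega>" using Apos by (simp add: field_simps)
    moreover have "A * K = C - e" using Apos by (simp add: K_def)
    ultimately have "-e < gam xs \<omega>" unfolding g by simp
    then show ?thesis by blast
  next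
    case nApos: False
    show ?thesis
    proof (cases "A < 0")
      case Aneg: True
      define B where "B = -A"
      have Bpos: "0 < B" using Aneg B_def by simp
      show ?thesis
      proof (rule ccontr)
        assume "\<not> ?thesis"
        then have le: "gam xs \<omega> \<le> -e" for \<omega> by (meson not_less)
        define G' where "G' = scl (1/B) xo"
        have okG: "\<forall>t\<in>set G'. okt E M t" unfolding G'_def using okO Bpos by (intro okt_scl) auto
        have Xlow: "gam G' \<omega> + (e - C) / B \<le> X \<omega>" for \<omega>
        proof -
          have "gam xo \<omega> - B * X \<omega> - C \<le> -e" using le[of \<omega>] unfolding g B_def by simp
          then have "gam xo \<omega> + e - C \<le> B * X \<omega>" by simp
          then have "(gam xo \<omega> + e - C) / B \<le> X \<omega>" using Bpos by (simp add: divide_le_eq mult.commute)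
          moreover have "gam G' \<omega> + (e - C) / B = (gam xo \<omega> + e - C) / B"
            unfolding G'_def gam_scl by (simp add: diff_divide_distrib add_divide_distrib)
          ultimately show ?thesis by simp
        qed
        define K where "K = (e - C) / B - e / (2*B)"
        have "ereal K \<le> U"
          unfolding U_def
        proof (rule INF_greatest)
          fix G2 assume "G2 \<in> {xs. \<forall>t\<in>set xs. okt E M t}"
          then have okG2: "\<forall>t\<in>set (G2 @ G'). okt E M t" using okG by auto
          have "0 < e / (2*B)" using e Bpos by simp
          then obtain \<omega> where w: "-(e / (2*B)) < gam (G2 @ G') \<omega>"
            using coh okG2 unfolding cohL_def by blast
          have "K < gam G2 \<omega> + X \<omega>" using w Xlow[of \<omega>] unfolding gam_append K_def by linarith
          then have "ereal K \<le> ereal (gam G2 \<omega> + X \<omega>)" by simp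
          also have "\<dots> \<le> (SUP \<omega>. ereal (gam G2 \<omega> + X \<omega>))" by (rule SUP_upper) auto
          finally show "ereal K \<le> (SUP \<omega>. ereal (gam G2 \<omega> + X \<omega>))" .
        qed
        then show False
        proof (cases U)
          case (real u)
          then have "C = -B * u" using Ufin B_def by simp
          then have "K = u + e / (2*B)" using Bpos unfolding K_def by (simp add: field_simps)
          moreover have "0 < e / (2*B)" using e Bpos by simp
          ultimately show False using \<open>ereal K \<le> U\<close> real by simp
        qed (use Uinf Aneg in auto)
      qed
    next
      case False
      then have A0: "A = 0" using nApos by simp
      have C0: "C = 0"
      proof (cases U)
        case (real u) then show ?thesis using Ufin A0 by simp
      next
        case PInf then show ?thesis unfolding C_def using okX A0 A_def by (intro sum_ac_zero1) auto
      next
        case MInf then show ?thesis unfolding C_def using okX A0 A_def by (intro sum_ac_zero2) auto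
      qed
      obtain \<omega> where "-e < gam xo \<omega>" using coh okO e unfolding cohL_def by blast
      then show ?thesis using g A0 C0 by auto
    qed
  qed
qed


lemma gam_nth: "gam xs \<omega> = (\<Sum>i<length xs. fst (snd (xs!i)) * (fst (xs!i) \<omega> - snd (snd (xs!i))))"
  unfolding gam_def sum_list_sum_nth by (simp add: atLeast0LessThan case_prod_unfold)

lemma merge:
  fixes P0 :: "('w \<Rightarrow> real) \<Rightarrow> ereal"
  assumes coh: "coherent1 {(X, UNIV) | X. X \<in> D} (\<lambda>X B. P0 X)"
  shows "cohL P0 D"
  unfolding cohL_def
proof (intro allI impI)
  fix xs :: "(('w \<Rightarrow> real) \<times> real \<times> real) list" and e :: real
  assume ok: "\<forall>t\<in>set xs. okt P0 D t" and e: "0 < e"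
  define n where "n = length xs"
  define Y where "Y i = fst (xs!i)" for i
  define a where "a i = fst (snd (xs!i))" for i
  define c where "c i = snd (snd (xs!i))" for i
  have oki: "Y i \<in> D \<and> (P0 (Y i) = \<infinity> \<longrightarrow> 0 \<le> a i) \<and> (P0 (Y i) = -\<infinity> \<longrightarrow> a i \<le> 0)
      \<and> (\<bar>P0 (Y i)\<bar> \<noteq> \<infinity> \<longrightarrow> ereal (c i) = P0 (Y i))" if "i < n" for i
  proof -
    have "xs!i \<in> set xs" using that n_def by simp
    then have "okt P0 D (xs!i)" using ok by blast
    then show ?thesis unfolding okt_def Y_def a_def c_def by (simp add: case_prod_beta)
  qed
  define I where "I Z = {i. i \<in> {..<n} \<and> Y i = Z}" for Z
  define AZ where "AZ Z = (\<Sum>i\<in>I Z. a i)" for Z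
  define CZ where "CZ Z = (\<Sum>i\<in>I Z. a i * c i)" for Z
  define c' where "c' Z = (if \<bar>P0 Z\<bar> \<noteq> \<infinity> then real_of_ereal (P0 Z) else if AZ Z = 0 then 0 else CZ Z / AZ Z)" for Z
  define Ys where "Ys = Y ` {..<n}"
  define F where "F = (\<lambda>Z. (Z, UNIV :: 'w set)) ` Ys"
  define \<alpha> where "\<alpha> p = AZ (fst p)" for p :: "('w \<Rightarrow> real) \<times> 'w set"
  define cc where "cc p = c' (fst p)" for p :: "('w \<Rightarrow> real) \<times> 'w set"
  have finI: "finite (I Z)" for Z unfolding I_def by auto
  have YsD: "Ys \<subseteq> D" unfolding Ys_def using oki by auto
  have s1: "P0 Z = \<infinity> \<Longrightarrow> 0 \<le> AZ Z" for Z
    unfolding AZ_def I_def using oki by (intro sum_nonneg) auto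
  have s2: "P0 Z = -\<infinity> \<Longrightarrow> AZ Z \<le> 0" for Z
    unfolding AZ_def I_def using oki by (intro sum_nonpos) auto
  have per: "(\<Sum>i\<in>I Z. a i * (Y i \<omega> - c i)) = AZ Z * (Z \<omega> - c' Z)" for Z \<omega>
  proof -
    have "(\<Sum>i\<in>I Z. a i * (Y i \<omega> - c i)) = (\<Sum>i\<in>I Z. a i * Z \<omega> - a i * c i)"
      by (rule sum.cong) (auto simp: I_def algebra_simps)
    also have "\<dots> = AZ Z * Z \<omega> - CZ Z"
      unfolding AZ_def CZ_def by (simp add: sum_subtractf sum_distrib_right)
    also have "\<dots> = AZ Z * (Z \<omega> - c' Z)"
    proof (cases "\<bar>P0 Z\<bar> \<noteq> \<infinity>")
      case True
      have "CZ Z = (\<Sum>i\<in>I Z. a i * c' Z)"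
        unfolding CZ_def
      proof (rule sum.cong)
        fix i assume "i \<in> I Z"
        then have "ereal (c i) = P0 Z" using oki True by (auto simp: I_def)
        then show "a i * c i = a i * c' Z" using True by (auto simp: c'_def)
      qed simp
      then show ?thesis unfolding AZ_def by (simp add: sum_distrib_right[symmetric] algebra_simps)
    next
      case False
      show ?thesis
      proof (cases "AZ Z = 0")
        case A0: True
        have "\<forall>i\<in>I Z. a i = 0"
        proof (cases "P0 Z = \<infinity>")
          case True
          then have "\<forall>i\<in>I Z. 0 \<le> a i" using oki by (auto simp: I_def)
          then show ?thesis using A0 sum_nonneg_eq_0_iff[OF finI[of Z], of a] unfolding AZ_def by auto
        next
          case c2: False
          then have "P0 Z = -\<infinity>" using False by auto
          then have "\<forall>i\<in>I Z. 0 \<le> - a i" using oki by (auto simp: I_def)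
          moreover have "(\<Sum>i\<in>I Z. - a i) = 0" using A0 unfolding AZ_def by (simp add: sum_negf)
          ultimately show ?thesis using sum_nonneg_eq_0_iff[OF finI[of Z], of "\<lambda>i. - a i"] by auto
        qed
        then have "CZ Z = 0" unfolding CZ_def by simp
        then show ?thesis using A0 by simp
      next
        case False
        then show ?thesis using \<open>\<not> \<bar>P0 Z\<bar> \<noteq> \<infinity>\<close> by (simp add: c'_def field_simps)
      qed
    qed
    finally show ?thesis .
  qed
  have sumeq: "(\<Sum>p\<in>F. \<alpha> p * indicator (snd p) \<omega> * (fst p \<omega> - cc p)) = gam xs \<omega>" for \<omega>
  proof -
    have "(\<Sum>p\<in>F. \<alpha> p * indicator (snd p) \<omega> * (fst p \<omega> - cc p)) = (\<Sum>Z\<in>Ys. AZ Z * (Z \<omega> - c' Z))"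
      unfolding F_def by (subst sum.reindex) (auto simp: inj_on_def \<alpha>_def cc_def)
    also have "\<dots> = (\<Sum>Z\<in>Ys. \<Sum>i\<in>I Z. a i * (Y i \<omega> - c i))" using per by simp
    also have "\<dots> = (\<Sum>i<n. a i * (Y i \<omega> - c i))"
      unfolding Ys_def I_def by (rule sum.image_gen[symmetric]) simp
    also have "\<dots> = gam xs \<omega>" unfolding gam_nth n_def a_def Y_def c_def ..
    finally show ?thesis .
  qed
  have "finite F \<and> F \<subseteq> {(X, UNIV) | X. X \<in> D}
        \<and> (\<forall>p\<in>F. P0 (fst p) = \<infinity> \<longrightarrow> \<alpha> p \<ge> 0)
        \<and> (\<forall>p\<in>F. P0 (fst p) = -\<infinity> \<longrightarrow> \<alpha> p \<le> 0)
        \<and> (\<forall>p\<in>F. \<bar>P0 (fst p)\<bar> \<noteq> \<infinity> \<longrightarrow> ereal (cc p) = P0 (fst p))"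
    using YsD s1 s2 unfolding F_def Ys_def \<alpha>_def cc_def c'_def
    by (auto simp: ereal_real')
  then have "0 \<le> (SUP \<omega>. ereal (\<Sum>p\<in>F. \<alpha> p * indicator (snd p) \<omega> * (fst p \<omega> - cc p)))"
    using coh unfolding coherent1_def by auto
  then have "0 \<le> (SUP \<omega>. ereal (gam xs \<omega>))" using sumeq by simp
  moreover have "ereal (-e) < 0" using e by simp
  ultimately have "ereal (-e) < (SUP \<omega>. ereal (gam xs \<omega>))" by (rule order.strict_trans2[rotated])
  then show "\<exists>\<omega>. -e < gam xs \<omega>" by (auto simp: less_SUP_iff)
qed


definition valR :: "('a \<times> 'b) set \<Rightarrow> 'a \<Rightarrow> 'b" where
  "valR R x = (THE v. (x, v) \<in> R)"

lemma valR_eq: "single_valued R \<Longrightarrow> (x, v) \<in> R \<Longrightarrow> valR R x = v"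
  unfolding valR_def by (rule the_equality) (auto dest: single_valuedD)

lemma okt_transfer:
  "okt E M t \<Longrightarrow> fst t \<in> M' \<Longrightarrow> E' (fst t) = E (fst t) \<Longrightarrow> okt E' M' t"
  by (auto simp: okt_def split: prod.splits)

lemma exists_total:
  fixes P0 :: "('w \<Rightarrow> real) \<Rightarrow> ereal"
  assumes coh0: "cohL P0 D"
  shows "\<exists>E. cohL E UNIV \<and> (\<forall>X\<in>D. E X = P0 X)"
proof -
  define R0 where "R0 = {(X, P0 X) | X. X \<in> D}"
  define \<A> where "\<A> = {R. R0 \<subseteq> R \<and> single_valued R \<and> cohL (valR R) (Domain R)}"
  have svR0: "single_valued R0" unfolding R0_def by (auto simp: single_valued_def)
  have domR0: "Domain R0 = D" unfolding R0_def by auto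
  have R0A: "R0 \<in> \<A>"
  proof -
    have "cohL (valR R0) D"
      using coh0 cohL_cong[of D "valR R0" P0] valR_eq[OF svR0] unfolding R0_def by auto
    then show ?thesis unfolding \<A>_def using svR0 domR0 by auto
  qed
  have "\<forall>C\<in>chains \<A>. \<exists>U\<in>\<A>. \<forall>X\<in>C. X \<subseteq> U"
  proof
    fix C assume C: "C \<in> chains \<A>"
    then have sc: "subset.chain \<A> C" by (simp add: chains_alt_def)
    then have CA: "C \<subseteq> \<A>" and ch: "\<And>x y. x \<in> C \<Longrightarrow> y \<in> C \<Longrightarrow> x \<subseteq> y \<or> y \<subseteq> x"
      by (auto simp: subset.chain_def)
    show "\<exists>U\<in>\<A>. \<forall>X\<in>C. X \<subseteq> U"
    proof (cases "C = {}")
      case True then show ?thesis using R0A by auto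
    next
      case False
      define U where "U = \<Union>C"
      have R0U: "R0 \<subseteq> U" using False CA unfolding U_def \<A>_def by auto
      have svU: "single_valued U"
        unfolding U_def
      proof (rule single_valuedI)
        fix x y z assume "(x, y) \<in> \<Union>C" "(x, z) \<in> \<Union>C"
        then obtain R1 R2 where "R1 \<in> C" "R2 \<in> C" "(x,y) \<in> R1" "(x,z) \<in> R2" by auto
        then show "y = z" using ch[of R1 R2] CA unfolding \<A>_def
          by (auto dest: single_valuedD)
      qed
      have cohU: "cohL (valR U) (Domain U)"
        unfolding cohL_def
      proof (intro allI impI)
        fix xs :: "(('w \<Rightarrow> real) \<times> real \<times> real) list" and e :: real
        assume ok: "\<forall>t\<in>set xs. okt (valR U) (Domain U) t" and e: "0 < e"
        define Ys where "Ys = fst ` set xs"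
        define PA where "PA = (\<lambda>Y. (Y, valR U Y)) ` Ys"
        have YsU: "Ys \<subseteq> Domain U" using ok unfolding Ys_def by (auto simp: okt_def split: prod.splits)
        have PAU: "PA \<subseteq> \<Union>C"
        proof
          fix p assume "p \<in> PA"
          then obtain Y where Y: "Y \<in> Ys" "p = (Y, valR U Y)" unfolding PA_def by auto
          then obtain v where "(Y, v) \<in> U" using YsU by auto
          then show "p \<in> \<Union>C" using Y valR_eq[OF svU] unfolding U_def by auto
        qed
        obtain R where R: "R \<in> C" "PA \<subseteq> R"
          using finite_subset_Union_chain[of PA C \<A>] PAU False sc unfolding PA_def Ys_def by auto
        have RA: "R \<in> \<A>" using R CA by auto
        then have svR: "single_valued R" and cohR: "cohL (valR R) (Domain R)" unfolding \<A>_def by auto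
        have okR: "\<forall>t\<in>set xs. okt (valR R) (Domain R) t"
        proof
          fix t assume t: "t \<in> set xs"
          then have "(fst t, valR U (fst t)) \<in> R" using R unfolding PA_def Ys_def by auto
          then have "fst t \<in> Domain R" "valR R (fst t) = valR U (fst t)" using valR_eq[OF svR] by auto
          then show "okt (valR R) (Domain R) t" using ok t okt_transfer by metis
        qed
        show "\<exists>\<omega>. -e < gam xs \<omega>" using cohR okR e unfolding cohL_def by blast
      qed
      have "U \<in> \<A>" unfolding \<A>_def using R0U svU cohU by auto
      then show ?thesis unfolding U_def by auto
    qed
  qed
  then obtain M where MA: "M \<in> \<A>" and max: "\<forall>X\<in>\<A>. M \<subseteq> X \<longrightarrow> X = M"
    using Zorn_Lemma2[of \<A>] by blast
  have svM: "single_valued M" and cohM: "cohL (valR M) (Domain M)" and R0M: "R0 \<subseteq> M"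
    using MA unfolding \<A>_def by auto
  have domM: "Domain M = UNIV"
  proof (rule ccontr)
    assume "Domain M \<noteq> UNIV"
    then obtain X where X: "X \<notin> Domain M" by auto
    define U where "U = (INF xs\<in>{xs. \<forall>t\<in>set xs. okt (valR M) (Domain M) t}. SUP \<omega>. ereal (gam xs \<omega> + X \<omega>))"
    define M' where "M' = insert (X, U) M"
    have svM': "single_valued M'" using svM X unfolding M'_def by (auto simp: single_valued_def)
    have c1: "cohL ((valR M)(X := U)) (insert X (Domain M))"
      using one_step[OF cohM X] unfolding U_def .
    have "cohL (valR M') (insert X (Domain M))"
    proof (rule iffD1[OF cohL_cong c1])
      fix Y assume Y: "Y \<in> insert X (Domain M)"
      show "((valR M)(X := U)) Y = valR M' Y"
      proof (cases "Y = X")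
        case True then show ?thesis using valR_eq[OF svM', of X U] unfolding M'_def by simp
      next
        case False
        then obtain v where v: "(Y, v) \<in> M" using Y by auto
        then show ?thesis using False valR_eq[OF svM v] valR_eq[OF svM', of Y v] unfolding M'_def by simp
      qed
    qed
    moreover have "Domain M' = insert X (Domain M)" unfolding M'_def by auto
    ultimately have "M' \<in> \<A>" using svM' R0M unfolding \<A>_def M'_def by auto
    then have "M' = M" using max unfolding M'_def by auto
    then show False using X unfolding M'_def by auto
  qed
  show ?thesis
  proof (intro exI conjI ballI)
    show "cohL (valR M) UNIV" using cohM domM by simp
    fix X assume "X \<in> D"
    then have "(X, P0 X) \<in> M" using R0M unfolding R0_def by auto
    then show "valR M X = P0 X" using valR_eq[OF svM] by simp
  qed
qed


theorem lemma7p2: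
  fixes D :: "('w \<Rightarrow> real) set" and P0 :: "('w \<Rightarrow> real) \<Rightarrow> ereal"
  assumes const_in: "\<And>c. (\<lambda>_. c) \<in> D"
    and coh: "coherent1 {(X, UNIV) | X. X \<in> D} (\<lambda>X B. P0 X)"
  shows "\<exists>P :: ('w \<Rightarrow> real) \<Rightarrow> 'w set \<Rightarrow> ereal.
           coherent1 {(X, B). X \<in> (lin_span {(\<lambda>\<omega>. X \<omega> * indicator B \<omega>) | X B. X \<in> D \<and> B \<noteq> {}}) \<and> B \<noteq> {}} P
         \<and> (\<forall>X\<in>D. P X UNIV = P0 X)
         \<and> (\<forall>B. B \<noteq> {} \<longrightarrow> fa_expectation (lin_span {(\<lambda>\<omega>. X \<omega> * indicator B \<omega>) | X B. X \<in> D \<and> B \<noteq> {}}) (\<lambda>X. P X B)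
                 \<and> (\<forall>X\<in>(lin_span {(\<lambda>\<omega>. X \<omega> * indicator B \<omega>) | X B. X \<in> D \<and> B \<noteq> {}}). P (\<lambda>\<omega>. X \<omega> * indicator B \<omega>) B = P X B))
         \<and> fa_cond_expectation (lin_span {(\<lambda>\<omega>. X \<omega> * indicator B \<omega>) | X B. X \<in> D \<and> B \<noteq> {}}) {B. B \<noteq> {}} P"
proof -
  obtain E where E: "cohL E UNIV" "\<forall>X\<in>D. E X = P0 X"
    using exists_total[OF merge[OF coh]] by blast
  show ?thesis
  proof (intro exI[of _ "Pc E"] conjI allI impI ballI)
    show "coherent1 {(X, B). X \<in> lin_span {\<lambda>\<omega>. X \<omega> * indicator B \<omega> |X B. X \<in> D \<and> B \<noteq> {}} \<and> B \<noteq> {}} (Pc E)"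
      by (rule Pc_coherent[OF E(1)])
  next
    fix X assume "X \<in> D" then show "Pc E X UNIV = P0 X" using E Pc_UNIV[OF E(1)] by simp
  next
    fix B :: "'w set" assume "B \<noteq> {}"
    then show "fa_expectation (lin_span {\<lambda>\<omega>. X \<omega> * indicator B \<omega> |X B. X \<in> D \<and> B \<noteq> {}}) (\<lambda>X. Pc E X B)"
      using Pc_fa[OF E(1)] by blast
  next
    fix B :: "'w set" and X assume "B \<noteq> {}"
    then show "Pc E (\<lambda>\<omega>. X \<omega> * indicator B \<omega>) B = Pc E X B"
      using Pc_fa[OF E(1)] by blast
  next
    show "fa_cond_expectation (lin_span {\<lambda>\<omega>. X \<omega> * indicator B \<omega> |X B. X \<in> D \<and> B \<noteq> {}}) {B. B \<noteq> {}} (Pc E)"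
      unfolding fa_cond_expectation_def using Pc_fa[OF E(1)] Pc_coherent[OF E(1)] by blast
  qed
qed

end
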